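(* For all sufficiently small $a>0$: if $(x,y)\in R$, $x\ne2$, $|y|\le a$ and $(x,y)\notin V_a$, then $\mathbf{W}(x,y)\notin V_a$. Furthermore, a $\mathbf{W}$-orbit $(z_k)$ converges to $p_0$ if and only if there exist $a'\in(0,1/10]$ and $k_0$ such that $z_k\in V_{a'}$ for all $k\ge k_0$.
   Context: For $x>0$, $y\in\mathbb{R}$ let $r_1^2=4+x^2+4x^2y^2$, $\Delta=((x+2)^2+8x^2y^2)((x-2)^2+8x^2y^2)$ and $\omega_\pm(x,y)=\frac{x^2-4\pm\sqrt{\Delta}}{2r_1^2}$. Let $p_0=(2,0)$, $R=\{(x,y): x>0,\ 4-4y^2-x^2y^2-8x^2y^4\ge 0\}$, $R_+=R\cap((0,2]\times\mathbb{R})$, $R_-=R\cap([2,\infty)\times\mathbb{R})$, and $r$ the line $x=2$. Define $\mathbf{W}_\pm(x,y)=\left(\frac{1+\omega_\pm}{1-\omega_\pm}x,\ \frac{|\omega_\pm|}{1+\omega_\pm}y\right)$ on $R_\pm$, and $\mathbf{W}$ on $R\setminus(r\setminus\{p_0\})$ by $\mathbf{W}=\mathbf{W}_+$ for $x<2$, $\mathbf{W}=\mathbf{W}_-$ for $x>2$, $\mathbf{W}(p_0)=p_0$. The $\mathbf{W}$-orbit of $z_0$ is $z_{k+1}=\mathbf{W}(z_k)$, defined as long as no $z_k$ lies on $r\setminus\{p_0\}$. For $0<a\le1/10$, $V_a=\{(x,y): |y|\le a,\ |y|\ge|x-2|/10\}$. *)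

theory Defs
  imports "HOL-Analysis.Analysis"
begin

definition r1sq :: "real \<Rightarrow> real \<Rightarrow> real" where
  "r1sq x y = 4 + x^2 + 4 * x^2 * y^2"

definition Delta :: "real \<Rightarrow> real \<Rightarrow> real" where
  "Delta x y = ((x + 2)^2 + 8 * x^2 * y^2) * ((x - 2)^2 + 8 * x^2 * y^2)"

definition omega_plus :: "real \<Rightarrow> real \<Rightarrow> real" where
  "omega_plus x y = (x^2 - 4 + sqrt (Delta x y)) / (2 * r1sq x y)"

definition omega_minus :: "real \<Rightarrow> real \<Rightarrow> real" where
  "omega_minus x y = (x^2 - 4 - sqrt (Delta x y)) / (2 * r1sq x y)"

definition p0 :: "real \<times> real" where
  "p0 = (2, 0)"

definition Rset :: "(real \<times> real) set" where
  "Rset = {(x, y). x > 0 \<and> 4 - 4 * y^2 - x^2 * y^2 - 8 * x^2 * y^4 \<ge> 0}"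

definition W_plus :: "real \<times> real \<Rightarrow> real \<times> real" where
  "W_plus z = (let x = fst z; y = snd z; w = omega_plus x y in
     ((1 + w) / (1 - w) * x, \<bar>w\<bar> / (1 + w) * y))"

definition W_minus :: "real \<times> real \<Rightarrow> real \<times> real" where
  "W_minus z = (let x = fst z; y = snd z; w = omega_minus x y in
     ((1 + w) / (1 - w) * x, \<bar>w\<bar> / (1 + w) * y))"

text \<open>The map W; it is only meaningful on Rset minus the points of the line x = 2 other
  than p0 (there its value is irrelevant and chosen as undefined).\<close>
definition W :: "real \<times> real \<Rightarrow> real \<times> real" where
  "W z = (if fst z < 2 then W_plus z
          else if fst z > 2 then W_minus z
          else if z = p0 then p0 else undefined)"

definition V :: "real \<Rightarrow> (real \<times> real) set" where
  "V a = {(x, y). \<bar>y\<bar> \<le> a \<and> \<bar>y\<bar> \<ge> \<bar>x - 2\<bar> / 10}"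

definition W_orbit :: "(nat \<Rightarrow> real \<times> real) \<Rightarrow> bool" where
  "W_orbit z \<longleftrightarrow> (\<forall>k. z k \<in> Rset \<and> (fst (z k) = 2 \<longrightarrow> z k = p0) \<and> z (Suc k) = W (z k))"

end

theory Submission
  imports Defs
begin

definition mm :: "real \<Rightarrow> real \<Rightarrow> real" where
  "mm x y = (sqrt (Delta x y) - \<bar>x^2 - 4\<bar>) / (2 * r1sq x y)"

lemma r_ge: "r1sq x y \<ge> x^2 + 4"
  unfolding r1sq_def by (simp add: zero_le_mult_iff)

lemma Delta_eq: "Delta x y = (x^2-4)^2 + (16*x^2*y^2*(x^2+4) + 64*x^4*y^4)"
  unfolding Delta_def by (simp add: power2_eq_square power4_eq_xxxx algebra_simps)

lemma Q_nonneg: "0 \<le> 16*x^2*y^2*(x^2+4) + 64*x^4*y^4" for x y :: real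
  by (simp add: zero_le_mult_iff)

lemma D_ge: "sqrt (Delta x y) \<ge> \<bar>x^2 - 4\<bar>"
proof -
  have "(x^2-4)^2 \<le> Delta x y" using Delta_eq[of x y] Q_nonneg[of x y] by linarith
  hence "sqrt ((x^2-4)^2) \<le> sqrt (Delta x y)" by (rule real_sqrt_le_mono)
  thus ?thesis by simp
qed

lemma mm_nonneg: "0 \<le> mm x y"
proof -
  have "0 < r1sq x y" using r_ge[of x y] by (metis add_nonneg_pos zero_le_power2 zero_less_numeral order_less_le_trans)
  thus ?thesis unfolding mm_def using D_ge[of x y] by simp
qed

lemma omega_plus_eq: assumes "0 < x" "x < 2" shows "omega_plus x y = mm x y"
proof -
  have "x^2 < 2^2" using assms by (intro power_strict_mono) auto
  hence "x^2 < 4" by simp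
  hence "\<bar>x^2-4\<bar> = -(x^2-4)" by simp
  thus ?thesis unfolding omega_plus_def mm_def by simp
qed

lemma r_pos: "0 < r1sq x y"
  using r_ge[of x y] by (metis add_nonneg_pos zero_le_power2 zero_less_numeral order_less_le_trans)

lemma omega_minus_eq: assumes "x > 2" shows "omega_minus x y = - mm x y"
proof -
  have "2^2 < x^2" using assms by (intro power_strict_mono) auto
  hence "x^2 > 4" by simp
  hence "\<bar>x^2-4\<bar> = (x^2-4)" by simp
  hence "mm x y = (sqrt (Delta x y) - (x^2-4)) / (2 * r1sq x y)" unfolding mm_def by simp
  also have "\<dots> = - ((x^2 - 4 - sqrt (Delta x y)) / (2 * r1sq x y))"
    by (simp add: minus_divide_left)
  finally show ?thesis unfolding omega_minus_def by simp
qed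

lemma W_lt: assumes "0 < x" "x < 2"
  shows "W (x,y) = ((1 + mm x y)/(1 - mm x y) * x, mm x y / (1 + mm x y) * y)"
proof -
  have "W (x,y) = W_plus (x,y)" using assms unfolding W_def by simp
  also have "\<dots> = ((1 + omega_plus x y)/(1 - omega_plus x y) * x, \<bar>omega_plus x y\<bar> / (1 + omega_plus x y) * y)"
    unfolding W_plus_def Let_def by (simp only: fst_conv snd_conv)
  finally show ?thesis unfolding omega_plus_eq[OF assms, of y] abs_of_nonneg[OF mm_nonneg[of x y]] .
qed

lemma W_gt: assumes "x > 2"
  shows "W (x,y) = ((1 - mm x y)/(1 + mm x y) * x, mm x y / (1 - mm x y) * y)"
proof -
  have "W (x,y) = W_minus (x,y)" using assms unfolding W_def by simp
  also have "\<dots> = ((1 + omega_minus x y)/(1 - omega_minus x y) * x, \<bar>omega_minus x y\<bar> / (1 + omega_minus x y) * y)"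
    unfolding W_minus_def Let_def by (simp only: fst_conv snd_conv)
  finally show ?thesis unfolding omega_minus_eq[OF assms, of y] abs_minus_cancel abs_of_nonneg[OF mm_nonneg[of x y]]
    by (simp only: diff_minus_eq_add add_uminus_conv_diff)
qed

lemma mm_bound1:
  assumes "0 < x" "x \<noteq> 2"
  shows "mm x y * (\<bar>x-2\<bar>*(x+2)) \<le> 4*x^2*y^2*(1+4*y^2)"
proof -
  define D where "D = sqrt (Delta x y)"
  define P where "P = \<bar>x^2-4\<bar>"
  define Q where "Q = 16*x^2*y^2*(x^2+4) + 64*x^4*y^4"
  define r where "r = r1sq x y"
  have rpos: "r \<ge> x^2+4" using r_ge unfolding r_def by simp
  have r0: "r > 0" unfolding r_def by (rule r_pos)
  have "x^2-4 = (x-2)*(x+2)" by (simp add: power2_eq_square algebra_simps)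
  hence PP: "P = \<bar>x-2\<bar>*(x+2)" unfolding P_def using assms by (simp add: abs_mult)
  have P0: "P \<ge> 0" unfolding P_def by simp
  have DP: "D \<ge> P" unfolding D_def P_def by (rule D_ge)
  have DD: "D^2 = P^2 + Q" unfolding D_def P_def Q_def
    using Delta_eq[of x y] Q_nonneg[of x y] by (simp add: power2_abs)
  have prod: "(D-P)*(D+P) = Q" using DD by (simp add: power2_eq_square algebra_simps)
  have "(D-P)*(2*P) \<le> (D-P)*(D+P)" using DP P0 by (intro mult_left_mono) auto
  hence h1: "(D-P)*(2*P) \<le> Q" using prod by simp
  have mmd: "mm x y = (D-P)/(2*r)" by (simp only: mm_def D_def P_def r_def)
  have mmr: "mm x y * (2*r) = D - P" unfolding mmd using r0 by simp
  have "Q \<le> 16*x^2*y^2*(1+4*y^2)*(x^2+4)"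
  proof -
    have e1: "x^4*y^4 = (x^2*y^2)*(x^2*y^2)" by (simp add: power4_eq_xxxx power2_eq_square)
    have "x^2*y^2 \<le> (x^2+4)*y^2" by (intro mult_right_mono) auto
    hence "(x^2*y^2)*(x^2*y^2) \<le> (x^2*y^2)*((x^2+4)*y^2)" by (intro mult_left_mono) auto
    hence "Q \<le> 16*x^2*y^2*(x^2+4) + 64*((x^2*y^2)*((x^2+4)*y^2))" unfolding Q_def e1 mult.assoc
      by linarith
    also have "\<dots> = 16*x^2*y^2*(1+4*y^2)*(x^2+4)" by (simp add: algebra_simps)
    finally show ?thesis .
  qed
  also have "\<dots> \<le> 16*x^2*y^2*(1+4*y^2)*r" using rpos
    by (intro mult_left_mono) (auto simp: zero_le_mult_iff)
  finally have h2: "Q \<le> 16*x^2*y^2*(1+4*y^2)*r" .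
  define K where "K = 4*x^2*y^2*(1+4*y^2)"
  have eK: "K * (4*r) = 16*x^2*y^2*(1+4*y^2)*r" unfolding K_def by (simp add: algebra_simps)
  have h3: "Q \<le> K*(4*r)" unfolding eK by (rule h2)
  have "mm x y * P * (4*r) = (mm x y*(2*r))*(2*P)" by (simp add: mult_ac)
  also have "\<dots> \<le> Q" using mmr h1 by simp
  also have "\<dots> \<le> K*(4*r)" by (rule h3)
  finally have "mm x y * P * (4*r) \<le> K * (4*r)" .
  hence "mm x y * P \<le> K" by (rule mult_right_le_imp_le) (use r0 in simp)
  hence "mm x y * P \<le> 4*x^2*y^2*(1+4*y^2)" unfolding K_def .
  thus ?thesis unfolding PP .
qed

lemma aux_t: fixes t :: real assumes "0 \<le> t"
  shows "16*t*(1/100)*(t+4) + 64*(t*t)*(1/10000) \<le> (t+4)^2/4"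
proof -
  have "(t+4)^2/4 - (16*t*(1/100)*(t+4) + 64*(t*t)*(1/10000)) = (t*t)*(1/4 - 16/100 - 64/10000) + t*(2 - 64/100) + 4"
    by (simp add: power2_eq_square field_simps)
  moreover have "0 \<le> (t*t)*(1/4 - 16/100 - 64/10000::real)" by simp
  moreover have "0 \<le> t*(2 - 64/100::real)" using assms by simp
  ultimately show ?thesis by linarith
qed

lemma mm_quarter:
  assumes "\<bar>y\<bar> \<le> 1/10"
  shows "mm x y \<le> 1/4"
proof -
  define D where "D = sqrt (Delta x y)"
  define P where "P = \<bar>x^2-4\<bar>"
  define r where "r = r1sq x y"
  have rpos: "r \<ge> x^2+4" using r_ge unfolding r_def by simp
  have r0: "r > 0" using rpos by (metis add_nonneg_pos zero_le_power2 zero_less_numeral order_less_le_trans)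
  have "y^2 \<le> (1/10)^2" using assms
    by (metis abs_ge_zero power2_abs power_mono)
  hence y2: "y^2 \<le> 1/100" by (simp add: power_divide)
  have x0: "0 \<le> x^2" by simp
  have "16*x^2*y^2*(x^2+4) + 64*x^4*y^4 \<le> 16*x^2*(1/100)*(x^2+4) + 64*(x^2*x^2)*(1/10000)"
  proof -
    have a: "16*x^2*y^2*(x^2+4) \<le> 16*x^2*(1/100)*(x^2+4)"
      using y2 x0 by (intro mult_right_mono mult_left_mono) auto
    have "y^4 = y^2*y^2" by (simp add: power4_eq_xxxx power2_eq_square)
    moreover have "y^2*y^2 \<le> (1/100)*(1/100)" using y2 by (intro mult_mono) auto
    ultimately have "y^4 \<le> 1/10000" by simp
    hence "64*x^4*y^4 \<le> 64*x^4*(1/10000)" using mult_left_mono[of "y^4" "1/10000" "64*x^4"] by simp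
    hence b: "64*x^4*y^4 \<le> 64*x^4*(1/10000)" by simp
    have "x^4 = x^2*x^2" by (simp add: power4_eq_xxxx power2_eq_square)
    thus ?thesis using a b by simp
  qed
  also have "\<dots> \<le> (x^2+4)^2/4" by (rule aux_t[OF x0])
  also have "\<dots> \<le> r^2/4" using rpos x0 by (simp add: power_mono)
  finally have Qle: "16*x^2*y^2*(x^2+4) + 64*x^4*y^4 \<le> r^2/4" .
  have P0: "0 \<le> P" unfolding P_def by simp
  have e: "(P + r/2)^2 = P^2 + P*r + r^2/4" by (simp add: power2_eq_square field_simps)
  have "0 \<le> P*r" using P0 r0 by simp
  moreover have "Delta x y = P^2 + (16*x^2*y^2*(x^2+4) + 64*x^4*y^4)"
    using Delta_eq[of x y] unfolding P_def by (simp add: power2_abs)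
  ultimately have "Delta x y \<le> (P + r/2)^2" using e Qle by linarith
  hence "D \<le> sqrt ((P + r/2)^2)" unfolding D_def by (rule real_sqrt_le_mono)
  hence "D \<le> P + r/2" using P0 r0 by simp
  hence "D - P \<le> (1/4) * (2*r)" by simp
  hence "(D-P)/(2*r) \<le> ((1/4)*(2*r))/(2*r)" using r0 by (intro divide_right_mono) auto
  also have "\<dots> = 1/4" using r0 by simp
  finally have "(D-P)/(2*r) \<le> 1/4" .
  moreover have "mm x y = (D-P)/(2*r)" by (simp only: mm_def D_def P_def r_def)
  ultimately show ?thesis by (simp only:)
qed

lemma step_bounds:
  assumes "0 < x" "x \<noteq> 2" "mm x y < 1"
  shows "\<bar>fst (W (x,y)) - x\<bar> \<le> 2 * mm x y * x / (1 - mm x y)"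
    and "\<bar>snd (W (x,y))\<bar> \<le> mm x y / (1 - mm x y) * \<bar>y\<bar>"
proof -
  define m where "m = mm x y"
  have m0: "0 \<le> m" unfolding m_def by (rule mm_nonneg)
  have m1: "m < 1" using assms(3) unfolding m_def .
  have d: "0 < 1 - m" using m1 by simp
  have "\<bar>fst (W (x,y)) - x\<bar> \<le> 2 * m * x / (1 - m) \<and> \<bar>snd (W (x,y))\<bar> \<le> m / (1 - m) * \<bar>y\<bar>"
  proof (cases "x < 2")
    case True
    have W: "W (x,y) = ((1 + m)/(1 - m) * x, m / (1 + m) * y)" unfolding m_def using W_lt[OF assms(1) True] .
    have "(1 + m)/(1 - m) * x - x = 2 * m * x / (1 - m)" using d by (simp add: field_simps)
    hence fx: "fst (W (x,y)) - x = 2 * m * x / (1 - m)" unfolding W by simp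
    have "0 \<le> 2 * m * x / (1 - m)" using m0 d assms(1) by simp
    hence f: "\<bar>fst (W (x,y)) - x\<bar> \<le> 2 * m * x / (1 - m)" unfolding fx by (simp only: abs_of_nonneg order_refl)
    have mm1: "m / (1 + m) \<le> m / (1 - m)" using m0 d by (intro divide_left_mono) auto
    have nn: "0 \<le> m / (1 + m)" using m0 by simp
    have "\<bar>snd (W (x,y))\<bar> = m / (1 + m) * \<bar>y\<bar>" unfolding W snd_conv abs_mult abs_of_nonneg[OF nn] ..
    also have "\<dots> \<le> m / (1 - m) * \<bar>y\<bar>" using mm1 by (rule mult_right_mono) simp
    finally show ?thesis using f by simp
  next
    case False
    hence x2: "x > 2" using assms(2) by simp
    have W: "W (x,y) = ((1 - m)/(1 + m) * x, m / (1 - m) * y)" unfolding m_def using W_gt[OF x2] .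
    have "(1 - m)/(1 + m) * x - x = - (2 * m * x / (1 + m))" using m0 by (simp add: field_simps)
    hence fx: "fst (W (x,y)) - x = - (2 * m * x / (1 + m))" unfolding W by simp
    have le: "2 * m * x / (1 + m) \<le> 2 * m * x / (1 - m)" using m0 d assms(1) by (intro divide_left_mono) auto
    have "0 \<le> 2 * m * x / (1 + m)" using m0 assms(1) by simp
    hence f: "\<bar>fst (W (x,y)) - x\<bar> \<le> 2 * m * x / (1 - m)" unfolding fx abs_minus_cancel using le
      by (simp only: abs_of_nonneg)
    have nn: "0 \<le> m / (1 - m)" using m0 d by simp
    have "\<bar>snd (W (x,y))\<bar> = m / (1 - m) * \<bar>y\<bar>" unfolding W snd_conv abs_mult abs_of_nonneg[OF nn] ..
    thus ?thesis using f by simp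
  qed
  thus "\<bar>fst (W (x,y)) - x\<bar> \<le> 2 * mm x y * x / (1 - mm x y)"
    and "\<bar>snd (W (x,y))\<bar> \<le> mm x y / (1 - mm x y) * \<bar>y\<bar>" unfolding m_def by auto
qed

lemma lemC:
  assumes "0 < x" "x \<noteq> 2" "\<bar>y\<bar> \<le> 1/10"
  shows "\<bar>snd (W (x,y))\<bar> \<le> \<bar>y\<bar> / 3"
proof -
  define m where "m = mm x y"
  have m0: "0 \<le> m" unfolding m_def by (rule mm_nonneg)
  have m4: "m \<le> 1/4" unfolding m_def using mm_quarter[OF assms(3)] .
  have "\<bar>snd (W (x,y))\<bar> \<le> m / (1 - m) * \<bar>y\<bar>" unfolding m_def
    using step_bounds(2)[OF assms(1,2)] m4 unfolding m_def by simp
  also have "m / (1 - m) \<le> 1/3" using m4 by (simp add: pos_divide_le_eq)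
  hence "m / (1 - m) * \<bar>y\<bar> \<le> 1/3 * \<bar>y\<bar>" by (intro mult_right_mono) auto
  finally show ?thesis by simp
qed


lemma y2_bound: fixes y c :: real assumes "\<bar>y\<bar> \<le> c" shows "y^2 \<le> c^2"
  using assms by (metis abs_ge_zero power2_abs power_mono)

lemma frac_le2: fixes m :: real assumes "0 \<le> m" "m \<le> 1/2" shows "m / (1 - m) \<le> 2*m"
proof -
  have "2*m*m \<le> 1*m" using assms by (intro mult_right_mono) auto
  hence "m \<le> 2*m*(1-m)" by (simp add: algebra_simps)
  thus ?thesis using assms by (simp add: pos_divide_le_eq)
qed

lemma tri2: fixes a x :: real shows "\<bar>x-2\<bar> \<le> \<bar>a - x\<bar> + \<bar>a - 2\<bar>"
  using abs_triangle_ineq[of "x - a" "a - 2"] by (simp add: abs_minus_commute)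

lemma lemA:
  assumes "0 < x" "x \<le> 3" "x \<noteq> 2" "\<bar>y\<bar> \<le> 1/100" "10*\<bar>y\<bar> < \<bar>x-2\<bar>"
  shows "\<bar>fst (W (x,y)) - 2\<bar> - 10*\<bar>snd (W (x,y))\<bar> \<ge> \<bar>x-2\<bar> - 10*\<bar>y\<bar>"
proof -
  define m where "m = mm x y"
  define ay where "ay = \<bar>y\<bar>"
  define au where "au = \<bar>x-2\<bar>"
  have m0: "0 \<le> m" unfolding m_def by (rule mm_nonneg)
  have ay0: "0 \<le> ay" unfolding ay_def by simp
  have u0: "0 < au" unfolding au_def using assms(3) by simp
  have xp: "0 < x+2" using assms(1) by simp
  have mb: "m * (au*(x+2)) \<le> 4*x^2*y^2*(1+4*y^2)" unfolding m_def au_def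
    by (rule mm_bound1[OF assms(1,3)])
  have "y^2 \<le> (1/100)^2" using y2_bound[OF assms(4)] .
  hence y2: "y^2 \<le> 1/10000" by (simp add: power_divide)
  have ha: "x^2 \<le> 3*x" using assms(1,2) by (simp add: power2_eq_square mult_right_mono)
  have hb: "1+4*y^2 \<le> 10004/10000" using y2 by simp
  have "x^2*(1+4*y^2) \<le> (3*x)*(10004/10000)" using ha hb assms(1) by (intro mult_mono) auto
  hence hc: "x^2*(1+4*y^2) \<le> (15/8)*(x+2)" using assms(2) by simp
  have ayu: "ay \<le> au/10" using assms(5) unfolding ay_def au_def by simp
  have "4*x^2*y^2*(1+4*y^2) = 4*ay*(ay*(x^2*(1+4*y^2)))" unfolding ay_def
    by (simp add: power2_eq_square abs_mult_self_eq algebra_simps)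
  also have "\<dots> \<le> 4*ay*((au/10)*((15/8)*(x+2)))"
  proof -
    have "ay*(x^2*(1+4*y^2)) \<le> (au/10)*((15/8)*(x+2))"
      by (rule mult_mono[OF ayu hc]) (use u0 in auto)
    thus ?thesis using ay0 by (intro mult_left_mono) auto
  qed
  also have "\<dots> = ((3/4)*ay) * (au*(x+2))" by (simp add: algebra_simps)
  finally have "m * (au*(x+2)) \<le> ((3/4)*ay) * (au*(x+2))" using mb by linarith
  hence mle: "m \<le> (3/4)*ay" by (rule mult_right_le_imp_le) (use u0 xp in simp)
  have ay1: "ay \<le> 1/100" unfolding ay_def using assms(4) .
  have m7: "m \<le> 1/7" using mle ay1 by linarith
  have step1: "\<bar>fst (W (x,y)) - x\<bar> \<le> 2 * m * x / (1 - m)"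
    unfolding m_def by (rule step_bounds(1)[OF assms(1,3)]) (use m7 m_def in simp)
  have step2: "\<bar>snd (W (x,y))\<bar> \<le> m / (1 - m) * ay"
    unfolding m_def ay_def by (rule step_bounds(2)[OF assms(1,3)]) (use m7 m_def in simp)
  have "2 * m * x / (1 - m) \<le> 7*m"
  proof -
    have "2*m*x \<le> 2*m*3" using m0 assms(2) by (intro mult_left_mono) auto
    moreover have "7*m*m \<le> 1*m" using m0 m7 by (intro mult_right_mono) auto
    ultimately have "2*m*x \<le> 7*m*(1-m)" by (simp add: algebra_simps)
    thus ?thesis using m7 by (simp add: pos_divide_le_eq)
  qed
  hence s1: "\<bar>fst (W (x,y)) - x\<bar> \<le> 7*m" using step1 by linarith
  have "m / (1 - m) * ay \<le> (2*m) * ay" using frac_le2[OF m0] m7 ay0 by (intro mult_right_mono) auto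
  also have "\<dots> \<le> (2*m)*(1/100)" using m0 ay1 by (intro mult_left_mono) auto
  finally have q: "m / (1 - m) * ay \<le> (2*m)*(1/100)" .
  have s2: "\<bar>snd (W (x,y))\<bar> \<le> m/50" using step2 q by linarith
  have t: "au \<le> \<bar>fst (W (x,y)) - x\<bar> + \<bar>fst (W (x,y)) - 2\<bar>" unfolding au_def by (rule tri2)
  show ?thesis using t s1 s2 mle unfolding au_def[symmetric] ay_def[symmetric] by linarith
qed

lemma lemB:
  assumes "3 \<le> x" "\<bar>y\<bar> \<le> 1/100"
  shows "10*\<bar>snd (W (x,y))\<bar> < \<bar>fst (W (x,y)) - 2\<bar>"
proof -
  define m where "m = mm x y"
  have x0: "0 < x" "x \<noteq> 2" using assms(1) by auto
  have m0: "0 \<le> m" unfolding m_def by (rule mm_nonneg)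
  have mb: "m * (\<bar>x-2\<bar>*(x+2)) \<le> 4*x^2*y^2*(1+4*y^2)" unfolding m_def
    by (rule mm_bound1[OF x0])
  have e: "\<bar>x-2\<bar>*(x+2) = x^2 - 4" using assms(1) by (simp add: power2_eq_square algebra_simps)
  have "y^2 \<le> (1/100)^2" using y2_bound[OF assms(2)] .
  hence y2: "y^2 \<le> 1/10000" by (simp add: power_divide)
  have x9: "9 \<le> x^2" using assms(1) power_mono[of 3 x 2] by simp
  have "y^2*(1+4*y^2) \<le> (1/10000)*2" using y2 by (intro mult_mono) auto
  hence "x^2*(y^2*(1+4*y^2)) \<le> x^2*((1/10000)*2)" by (intro mult_left_mono) auto
  hence "4*x^2*y^2*(1+4*y^2) \<le> (1/100)*(x^2-4)" using x9 by (simp add: algebra_simps)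
  hence "m * (x^2-4) \<le> (1/100)*(x^2-4)" using mb e by simp
  hence m1: "m \<le> 1/100" by (rule mult_right_le_imp_le) (use x9 in simp)
  have step1: "\<bar>fst (W (x,y)) - x\<bar> \<le> 2 * m * x / (1 - m)"
    unfolding m_def by (rule step_bounds(1)[OF x0]) (use m1 m_def in simp)
  have step2: "\<bar>snd (W (x,y))\<bar> \<le> m / (1 - m) * \<bar>y\<bar>"
    unfolding m_def by (rule step_bounds(2)[OF x0]) (use m1 m_def in simp)
  have "2 * m * x / (1 - m) \<le> x/40"
  proof -
    have "m*x \<le> (1/100)*x" using m1 assms(1) by (intro mult_right_mono) auto
    moreover have "(x/40)*(1-m) = x/40 - m*x/40" by (simp add: field_simps)
    ultimately have "2*m*x \<le> (x/40)*(1-m)" using assms(1) by linarith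
    thus ?thesis using m1 by (simp add: pos_divide_le_eq)
  qed
  hence s1: "\<bar>fst (W (x,y)) - x\<bar> \<le> x/40" using step1 by linarith
  have "m / (1 - m) * \<bar>y\<bar> \<le> (2*m) * \<bar>y\<bar>" using frac_le2[OF m0] m1 by (intro mult_right_mono) auto
  also have "\<dots> \<le> (2*(1/100))*(1/100)" using m0 m1 assms(2) by (intro mult_mono) auto
  finally have q: "m / (1 - m) * \<bar>y\<bar> \<le> (2*(1/100))*(1/100)" .
  have s2: "\<bar>snd (W (x,y))\<bar> \<le> 2/10000" using step2 q by linarith
  have t: "\<bar>x-2\<bar> \<le> \<bar>fst (W (x,y)) - x\<bar> + \<bar>fst (W (x,y)) - 2\<bar>" by (rule tri2)
  show ?thesis using t s1 s2 assms(1) by linarith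
qed


lemma V_mem: "p \<in> V a \<longleftrightarrow> \<bar>snd p\<bar> \<le> a \<and> \<bar>snd p\<bar> \<ge> \<bar>fst p - 2\<bar> / 10"
  by (cases p) (simp add: V_def)

lemma Rset_pos: "p \<in> Rset \<Longrightarrow> fst p > 0"
  by (cases p) (simp add: Rset_def)

lemma W_p0: "W p0 = p0"
  unfolding W_def p0_def by simp

lemma part1:
  assumes a: "0 < a" "a \<le> 1/100" and x0: "0 < x" and x2: "x \<noteq> 2" and ya: "\<bar>y\<bar> \<le> a"
    and nv: "(x, y) \<notin> V a"
  shows "W (x, y) \<notin> V a"
proof -
  have y1: "\<bar>y\<bar> \<le> 1/100" using ya a by simp
  have lt: "10*\<bar>y\<bar> < \<bar>x-2\<bar>" using nv ya unfolding V_mem by simp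
  show ?thesis
  proof (cases "x \<le> 3")
    case True
    from lemA[OF x0 True x2 y1 lt]
    have "10*\<bar>snd (W (x,y))\<bar> < \<bar>fst (W (x,y)) - 2\<bar>" using lt by linarith
    thus ?thesis unfolding V_mem by simp
  next
    case False
    hence "3 \<le> x" by simp
    from lemB[OF this y1] show ?thesis unfolding V_mem by simp
  qed
qed

lemma orbit_facts:
  assumes "W_orbit z"
  shows "fst (z k) > 0" "fst (z k) = 2 \<Longrightarrow> z k = p0" "z (Suc k) = W (z k)"
  using assms Rset_pos unfolding W_orbit_def by blast+

lemma part2_if:
  assumes orb: "W_orbit z" and a: "0 < a'" "a' \<le> 1/10" and k0: "\<forall>k\<ge>k0. z k \<in> V a'"
  shows "z \<longlonglongrightarrow> p0"
proof -
  have dec: "\<bar>snd (z (Suc k))\<bar> \<le> \<bar>snd (z k)\<bar> / 3" if "k \<ge> k0" for k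
  proof (cases "fst (z k) = 2")
    case True
    hence "z k = p0" using orbit_facts(2)[OF orb] by blast
    hence "z (Suc k) = p0" using orbit_facts(3)[OF orb, of k] W_p0 by simp
    thus ?thesis by (simp add: p0_def)
  next
    case False
    have yb: "\<bar>snd (z k)\<bar> \<le> 1/10" using k0 that a unfolding V_mem by force
    have "\<bar>snd (W (fst (z k), snd (z k)))\<bar> \<le> \<bar>snd (z k)\<bar> / 3"
      by (rule lemC[OF orbit_facts(1)[OF orb] False yb])
    thus ?thesis using orbit_facts(3)[OF orb, of k] by simp
  qed
  have geo: "\<bar>snd (z (j + k0))\<bar> \<le> \<bar>snd (z k0)\<bar> * (1/3)^j" for j
  proof (induction j)
    case 0 then show ?case by simp
  next
    case (Suc j)
    have "\<bar>snd (z (Suc j + k0))\<bar> \<le> \<bar>snd (z (j + k0))\<bar> / 3" using dec[of "j + k0"] by simp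
    also have "\<dots> \<le> \<bar>snd (z k0)\<bar> * (1/3)^j / 3" using Suc by simp
    finally show ?case by simp
  qed
  have g0: "(\<lambda>j. \<bar>snd (z k0)\<bar> * (1/3::real)^j) \<longlonglongrightarrow> 0"
    by (intro tendsto_mult_right_zero LIMSEQ_power_zero) simp
  have ys: "(\<lambda>j. snd (z (j + k0))) \<longlonglongrightarrow> 0"
    by (rule Lim_null_comparison[OF _ g0]) (use geo in simp)
  have ys': "(\<lambda>k. snd (z k)) \<longlonglongrightarrow> 0" by (rule LIMSEQ_offset[OF ys])
  have xb: "\<bar>fst (z (j + k0)) - 2\<bar> \<le> 10 * \<bar>snd (z (j + k0))\<bar>" for j
    using k0 unfolding V_mem by (metis le_add2 divide_le_eq_numeral1(1) mult.commute)
  have g1: "(\<lambda>j. 10 * \<bar>snd (z (j + k0))\<bar>) \<longlonglongrightarrow> 0"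
    by (intro tendsto_mult_right_zero tendsto_rabs_zero ys)
  have "(\<lambda>j. fst (z (j + k0)) - 2) \<longlonglongrightarrow> 0"
    by (rule Lim_null_comparison[OF _ g1]) (use xb in simp)
  hence "(\<lambda>j. fst (z (j + k0))) \<longlonglongrightarrow> 2" by (simp add: LIM_zero_iff)
  hence xs': "(\<lambda>k. fst (z k)) \<longlonglongrightarrow> 2" by (rule LIMSEQ_offset)
  have "(\<lambda>k. (fst (z k), snd (z k))) \<longlonglongrightarrow> (2, 0)" by (rule tendsto_Pair[OF xs' ys'])
  thus ?thesis by (simp add: p0_def)
qed

lemma part2_only_if:
  assumes orb: "W_orbit z" and lim: "z \<longlonglongrightarrow> p0"
  shows "\<exists>k0. \<forall>k\<ge>k0. z k \<in> V (1/100)"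
proof (rule ccontr)
  assume nc: "\<not> ?thesis"
  have xs: "(\<lambda>k. fst (z k)) \<longlonglongrightarrow> 2" using tendsto_fst[OF lim] by (simp add: p0_def)
  have ys: "(\<lambda>k. snd (z k)) \<longlonglongrightarrow> 0" using tendsto_snd[OF lim] by (simp add: p0_def)
  obtain N1 where N1: "\<forall>n\<ge>N1. norm (fst (z n) - 2) < 1" using LIMSEQ_D[OF xs, of 1] by auto
  obtain N2 where N2: "\<forall>n\<ge>N2. norm (snd (z n) - 0) < 1/100" using LIMSEQ_D[OF ys, of "1/100"] by auto
  define N where "N = max N1 N2"
  have xN: "\<bar>fst (z n) - 2\<bar> < 1" if "n \<ge> N" for n using N1 that unfolding N_def by auto
  have yN: "\<bar>snd (z n)\<bar> < 1/100" if "n \<ge> N" for n using N2 that unfolding N_def by auto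
  obtain k1 where k1: "k1 \<ge> N" "z k1 \<notin> V (1/100)" using nc by blast
  define \<delta> where "\<delta> = \<bar>fst (z k1) - 2\<bar> - 10*\<bar>snd (z k1)\<bar>"
  have d0: "\<delta> > 0" using k1(2) yN[OF k1(1)] unfolding V_mem \<delta>_def by simp
  have inv: "\<bar>fst (z (k1 + j)) - 2\<bar> - 10*\<bar>snd (z (k1 + j))\<bar> \<ge> \<delta>" for j
  proof (induction j)
    case 0 then show ?case by (simp add: \<delta>_def)
  next
    case (Suc j)
    define k where "k = k1 + j"
    define x where "x = fst (z k)"
    define y where "y = snd (z k)"
    have kN: "k \<ge> N" unfolding k_def using k1(1) by simp
    have IH: "\<bar>x - 2\<bar> - 10*\<bar>y\<bar> \<ge> \<delta>" using Suc unfolding x_def y_def k_def .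
    have lt: "10*\<bar>y\<bar> < \<bar>x-2\<bar>" using IH d0 by linarith
    hence x2: "x \<noteq> 2" by auto
    have x0: "0 < x" unfolding x_def by (rule orbit_facts(1)[OF orb])
    have x3: "x \<le> 3" using xN[OF kN] unfolding x_def by simp
    have y1: "\<bar>y\<bar> \<le> 1/100" using yN[OF kN] unfolding y_def by simp
    have zs: "z (Suc k) = W (x, y)" unfolding x_def y_def using orbit_facts(3)[OF orb, of k] by simp
    have "\<bar>fst (W (x,y)) - 2\<bar> - 10*\<bar>snd (W (x,y))\<bar> \<ge> \<bar>x-2\<bar> - 10*\<bar>y\<bar>"
      by (rule lemA[OF x0 x3 x2 y1 lt])
    hence "\<bar>fst (z (Suc k)) - 2\<bar> - 10*\<bar>snd (z (Suc k))\<bar> \<ge> \<delta>" using IH zs by simp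
    thus ?case unfolding k_def by simp
  qed
  obtain N3 where N3: "\<forall>n\<ge>N3. norm (fst (z n) - 2) < \<delta>" using LIMSEQ_D[OF xs d0] by blast
  have "norm (fst (z (k1 + N3)) - 2) < \<delta>" using N3 by simp
  moreover have "\<bar>fst (z (k1 + N3)) - 2\<bar> \<ge> \<delta>" using inv[of N3] by simp
  ultimately show False by simp
qed

theorem lemma5p2:
  shows "(\<exists>a0>0. \<forall>a. 0 < a \<and> a \<le> a0 \<longrightarrow>
            (\<forall>x y. (x, y) \<in> Rset \<and> x \<noteq> 2 \<and> \<bar>y\<bar> \<le> a \<and> (x, y) \<notin> V a
                   \<longrightarrow> W (x, y) \<notin> V a))
       \<and> (\<forall>z. W_orbit z \<longrightarrow>
            (z \<longlonglongrightarrow> p0 \<longleftrightarrow>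
             (\<exists>a'. 0 < a' \<and> a' \<le> 1/10 \<and> (\<exists>k0. \<forall>k\<ge>k0. z k \<in> V a'))))"
proof (intro conjI allI impI iffI)
  show "\<exists>a0>0. \<forall>a. 0 < a \<and> a \<le> a0 \<longrightarrow>
            (\<forall>x y. (x, y) \<in> Rset \<and> x \<noteq> 2 \<and> \<bar>y\<bar> \<le> a \<and> (x, y) \<notin> V a
                   \<longrightarrow> W (x, y) \<notin> V a)"
  proof (intro exI[of _ "1/100"] conjI allI impI)
    fix a x y
    assume a: "0 < a \<and> a \<le> (1/100::real)"
      and h: "(x, y) \<in> Rset \<and> x \<noteq> 2 \<and> \<bar>y\<bar> \<le> a \<and> (x, y) \<notin> V a"
    have x0: "0 < x" using Rset_pos[of "(x,y)"] h by simp
    show "W (x, y) \<notin> V a" using part1[of a x y] a h x0 by blast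
  qed simp
next
  fix z assume orb: "W_orbit z" and lim: "z \<longlonglongrightarrow> p0"
  show "\<exists>a'. 0 < a' \<and> a' \<le> 1/10 \<and> (\<exists>k0. \<forall>k\<ge>k0. z k \<in> V a')"
    using part2_only_if[OF orb lim] by (intro exI[of _ "1/100"]) simp
next
  fix z assume orb: "W_orbit z" and h: "\<exists>a'. 0 < a' \<and> a' \<le> 1/10 \<and> (\<exists>k0. \<forall>k\<ge>k0. z k \<in> V a')"
  then obtain a' k0 where "0 < a'" "a' \<le> 1/10" "\<forall>k\<ge>k0. z k \<in> V a'" by blast
  thus "z \<longlonglongrightarrow> p0" using part2_if[OF orb] by blast
qed

end
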